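(* Let $P\subseteq\mathbb{P}^{n-1}$ be a full-dimensional polytope and fix $1\le k\le n$. Then $P^{[k]}=\mathrm{cl}(P^{[k]}_{\max})$, the closure being taken in $\mathrm{Gr}(k,n)$.
   Context: Work over $\mathbb{R}$. $\mathrm{Gr}(k,n)$ is the Grassmannian of $k$-dimensional linear subspaces of $\mathbb{R}^n$; subspaces are identified with their images in $\mathbb{P}^{n-1}$. A polytope $P\subseteq\mathbb{P}^{n-1}$ is the image in $\mathbb{P}^{n-1}$ of a cone $\{\sum c_iv_i: c_i\ge0\}$ over finitely many $v_i\in\mathbb{R}^n$ (projectivization of the cone over a polytope in an affine hyperplane not through the origin); faces and dimensions are those of the underlying polytope. $P^{[k]}=\{V\in\mathrm{Gr}(k,n)\mid V\cap P\ne\emptyset\}$ and $P^{[k]}_{\max}=\{V\in P^{[k]}\mid V\cap G=\emptyset$ for every face $G$ of $P$ with $\dim G<n-k\}$. *)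

theory Defs
  imports "HOL-Analysis.Analysis"
begin

text \<open>Points of R^n are vectors of type real^'n, with n = CARD('n).
  A k-dimensional linear subspace V of R^n is identified with its image in P^(n-1).\<close>

definition Gr :: "nat \<Rightarrow> ('n::finite) itself \<Rightarrow> (real^'n) set set" where
  "Gr k _ = {V. subspace V \<and> dim V = k}"

definition orth_proj :: "(real^'n::finite) set \<Rightarrow> real^'n \<Rightarrow> real^'n" where
  "orth_proj V x = (THE v. v \<in> V \<and> (\<forall>w\<in>V. (x - v) \<bullet> w = 0))"

definition proj_matrix :: "(real^'n::finite) set \<Rightarrow> real^'n^'n" where
  "proj_matrix V = matrix (orth_proj V)"

text \<open>Standard topology on Gr(k,n): the one induced by the (injective) embedding
  V \<mapsto> orthogonal projection matrix onto V.\<close>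

definition Gr_topology :: "nat \<Rightarrow> ('n::finite) itself \<Rightarrow> (real^'n) set topology" where
  "Gr_topology k t = pullback_topology (Gr k t) proj_matrix euclidean"

text \<open>A polytope P in P^(n-1) is given as the projectivization of the cone over the
  polytope Q = conv(S), S a finite set lying in an affine hyperplane {x. a . x = b} with b \<noteq> 0.
  Faces and dimension of P are those of Q. A subspace V meets (the image of) a set G \<subseteq> Q
  iff some point of G lies in V (all points of Q are nonzero).\<close>

definition meets :: "(real^'n::finite) set \<Rightarrow> (real^'n) set \<Rightarrow> bool" where
  "meets V G \<longleftrightarrow> (\<exists>x\<in>G. x \<in> V)"

definition Pk :: "(real^'n::finite) set \<Rightarrow> nat \<Rightarrow> (real^'n) set set" where
  "Pk Q k = {V \<in> Gr k TYPE('n). meets V Q}"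

definition Pk_max :: "(real^'n::finite) set \<Rightarrow> nat \<Rightarrow> (real^'n) set set" where
  "Pk_max Q k = {V \<in> Pk Q k. \<forall>G. G face_of Q \<and> aff_dim G < int CARD('n) - int k
       \<longrightarrow> \<not> meets V G}"

end

theory Submission
  imports Defs
begin

lemma op_ex:
  fixes V :: "(real^'n::finite) set"
  assumes "subspace V"
  shows "orth_proj V x \<in> V \<and> (\<forall>w\<in>V. (x - orth_proj V x) \<bullet> w = 0)"
proof -
  obtain y z where y: "y \<in> span V" and z: "\<And>w. w \<in> span V \<Longrightarrow> orthogonal z w" and xyz: "x = y + z"
    using orthogonal_subspace_decomp_exists by blast
  have yV: "y \<in> V" using y assms by (metis span_eq_iff)
  have P: "y \<in> V \<and> (\<forall>w\<in>V. (x - y) \<bullet> w = 0)"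
    using yV z xyz span_base by (force simp: orthogonal_def)
  have U: "v = y" if "v \<in> V \<and> (\<forall>w\<in>V. (x - v) \<bullet> w = 0)" for v
  proof -
    have "y - v \<in> V" using that yV assms by (simp add: subspace_diff)
    moreover have "(x - v) \<bullet> (y - v) = 0" "(x - y) \<bullet> (y - v) = 0" using that P \<open>y - v \<in> V\<close> by auto
    ultimately have "(y - v) \<bullet> (y - v) = 0" by (simp add: inner_diff_left inner_diff_right algebra_simps)
    then show ?thesis by simp
  qed
  have "orth_proj V x = y" unfolding orth_proj_def
    by (rule the_equality, rule P, erule U)
  then show ?thesis using P by simp
qed

lemma op_unique:
  fixes V :: "(real^'n::finite) set"
  assumes "subspace V" "v \<in> V" "\<forall>w\<in>V. (x - v) \<bullet> w = 0"
  shows "orth_proj V x = v"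
proof -
  let ?p = "orth_proj V x"
  have P: "?p \<in> V" "\<forall>w\<in>V. (x - ?p) \<bullet> w = 0" using op_ex[OF assms(1)] by auto
  have "?p - v \<in> V" using P assms by (simp add: subspace_diff)
  then have "(x - v) \<bullet> (?p - v) = 0" "(x - ?p) \<bullet> (?p - v) = 0" using P assms by auto
  then have "(?p - v) \<bullet> (?p - v) = 0" by (simp add: inner_diff_left inner_diff_right algebra_simps)
  then show ?thesis by simp
qed

lemma op_in: "subspace V \<Longrightarrow> orth_proj V x \<in> V"
  using op_ex by blast

lemma op_orth: "subspace V \<Longrightarrow> w \<in> V \<Longrightarrow> (x - orth_proj V x) \<bullet> w = 0"
  using op_ex by blast

lemma op_id: "subspace V \<Longrightarrow> v \<in> V \<Longrightarrow> orth_proj V v = v"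
  by (rule op_unique) auto

lemma op_linear:
  fixes V :: "(real^'n::finite) set"
  assumes "subspace V"
  shows "linear (orth_proj V)"
proof (rule linearI)
  fix x y
  show "orth_proj V (x + y) = orth_proj V x + orth_proj V y"
    apply (rule op_unique[OF assms])
    using op_in[OF assms] op_orth[OF assms] assms
     apply (simp add: subspace_add)
    by (simp add: add_diff_add inner_add_left op_orth[OF assms])
next
  fix c :: real and x
  show "orth_proj V (c *\<^sub>R x) = c *\<^sub>R orth_proj V x"
    apply (rule op_unique[OF assms])
    using op_in[OF assms] op_orth[OF assms] assms
     apply (simp add: subspace_scale)
    by (simp add: op_orth[OF assms] flip: scaleR_diff_right)
qed

lemma pm_mult:
  fixes V :: "(real^'n::finite) set"
  assumes "subspace V"
  shows "proj_matrix V *v x = orth_proj V x"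
  unfolding proj_matrix_def using matrix_vector_mul(2)[OF op_linear[OF assms]] by metis

lemma op_pyth:
  fixes V :: "(real^'n::finite) set"
  assumes "subspace V"
  shows "norm x ^ 2 = norm (orth_proj V x) ^ 2 + norm (x - orth_proj V x) ^ 2"
proof -
  have "(x - orth_proj V x) \<bullet> orth_proj V x = 0" using op_orth op_in assms by blast
  then have "orthogonal (orth_proj V x) (x - orth_proj V x)" by (simp add: orthogonal_def inner_commute)
  then have "norm (orth_proj V x + (x - orth_proj V x)) ^ 2 = norm (orth_proj V x) ^ 2 + norm (x - orth_proj V x) ^ 2"
    by (rule norm_add_Pythagorean)
  then show ?thesis by simp
qed

lemma op_norm_le: "subspace V \<Longrightarrow> norm (orth_proj V x) \<le> norm x"
  apply (rule power2_le_imp_le)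
  using op_pyth[of V x] by simp_all

lemma op_norm_le2: "subspace V \<Longrightarrow> norm (x - orth_proj V x) \<le> norm x"
  apply (rule power2_le_imp_le)
  using op_pyth[of V x] by simp_all

lemma op_min:
  fixes V :: "(real^'n::finite) set"
  assumes "subspace V" "w \<in> V"
  shows "norm (x - orth_proj V x) \<le> norm (x - w)"
proof -
  let ?p = "orth_proj V x"
  have "?p - w \<in> V" using assms op_in[OF assms(1)] by (simp add: subspace_diff)
  then have "(x - ?p) \<bullet> (?p - w) = 0" using op_orth assms by blast
  then have "orthogonal (x - ?p) (?p - w)" by (simp add: orthogonal_def)
  then have "norm ((x - ?p) + (?p - w)) ^ 2 = norm (x - ?p) ^ 2 + norm (?p - w) ^ 2"
    by (rule norm_add_Pythagorean)
  then have "norm (x - w) ^ 2 \<ge> norm (x - ?p) ^ 2" by simp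
  then show ?thesis using power2_le_imp_le by fastforce
qed

lemma proj_diff:
  fixes V W :: "(real^'n::finite) set"
  assumes sV: "subspace V" and sW: "subspace W" and d1: "d1 \<ge> 0" and d2: "d2 \<ge> 0"
    and h1: "\<forall>v\<in>V. norm (v - orth_proj W v) \<le> d1 * norm v"
    and h2: "\<forall>w\<in>W. norm (w - orth_proj V w) \<le> d2 * norm w"
  shows "norm (orth_proj V x - orth_proj W x) \<le> (d1 + d2) * norm x"
proof -
  define u where "u = x - orth_proj W x"
  define p where "p = orth_proj W x"
  define q where "q = orth_proj V u"
  have lin: "linear (orth_proj V)" by (rule op_linear[OF sV])
  have "orth_proj V x = q + orth_proj V p"
    unfolding q_def u_def p_def using linear_diff[OF lin] by simp
  then have eq: "orth_proj V x - orth_proj W x = q - (p - orth_proj V p)"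
    by (simp add: p_def)
  have pW: "p \<in> W" unfolding p_def by (rule op_in[OF sW])
  have b2: "norm (p - orth_proj V p) \<le> d2 * norm x"
  proof -
    have "norm (p - orth_proj V p) \<le> d2 * norm p" using h2 pW by blast
    also have "\<dots> \<le> d2 * norm x" unfolding p_def using op_norm_le[OF sW] d2 by (simp add: mult_left_mono)
    finally show ?thesis .
  qed
  have qV: "q \<in> V" unfolding q_def by (rule op_in[OF sV])
  have "(u - q) \<bullet> q = 0" unfolding q_def by (rule op_orth[OF sV op_in[OF sV]])
  then have qq: "q \<bullet> q = q \<bullet> u" by (smt (verit) inner_diff_left inner_commute)
  have "u \<bullet> orth_proj W q = 0" unfolding u_def by (rule op_orth[OF sW op_in[OF sW]])
  then have "q \<bullet> u = (q - orth_proj W q) \<bullet> u" by (smt (verit) inner_diff_left inner_commute)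
  also have "\<dots> \<le> norm (q - orth_proj W q) * norm u" by (rule norm_cauchy_schwarz)
  also have "\<dots> \<le> d1 * norm q * norm u" using h1 qV by (simp add: mult_right_mono)
  finally have "norm q ^ 2 \<le> d1 * norm q * norm u" using qq by (simp add: power2_norm_eq_inner)
  then have b1: "norm q \<le> d1 * norm u"
    by (cases "norm q = 0") (use d1 in \<open>auto simp: power2_eq_square\<close>)
  have "norm u \<le> norm x" unfolding u_def by (rule op_norm_le2[OF sW])
  then have b1': "norm q \<le> d1 * norm x" using b1 d1 by (meson mult_left_mono order_trans)
  have "norm (orth_proj V x - orth_proj W x) \<le> norm q + norm (p - orth_proj V p)"
    unfolding eq by (rule norm_triangle_ineq4)
  also have "\<dots> \<le> (d1 + d2) * norm x" using b1' b2 by (simp add: distrib_right)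
  finally show ?thesis .
qed

lemma mat_norm_bound:
  fixes A :: "real^'n::finite^'n"
  assumes "\<And>x. norm (A *v x) \<le> c * norm x"
  shows "norm A \<le> real CARD('n) * real CARD('n) * c"
proof -
  have c0: "c \<ge> 0" using assms[of "axis undefined 1"] by simp (smt (verit) norm_ge_zero)
  have e: "\<bar>A$i$j\<bar> \<le> c" for i j
  proof -
    have "\<bar>A$i$j\<bar> = \<bar>(A *v axis j 1)$i\<bar>" by (simp add: matrix_vector_mult_basis column_def)
    also have "\<dots> \<le> norm (A *v axis j 1)" by (rule component_le_norm_cart)
    also have "\<dots> \<le> c" using assms[of "axis j 1"] by simp
    finally show ?thesis .
  qed
  have r: "norm (A$i) \<le> real CARD('n) * c" for i
  proof -
    have "norm (A$i) \<le> (\<Sum>j\<in>UNIV. \<bar>A$i$j\<bar>)" by (rule norm_le_l1_cart)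
    also have "\<dots> \<le> (\<Sum>j\<in>(UNIV::'n set). c)" by (rule sum_mono) (rule e)
    finally show ?thesis by simp
  qed
  have "norm A \<le> (\<Sum>i\<in>UNIV. norm (A$i))"
    unfolding norm_vec_def by (rule L2_set_le_sum) simp
  also have "\<dots> \<le> (\<Sum>i\<in>(UNIV::'n set). real CARD('n) * c)" by (rule sum_mono) (rule r)
  finally show ?thesis by simp
qed

lemma mat_mult_bound:
  fixes A :: "real^'n::finite^'n"
  shows "norm (A *v x) \<le> real CARD('n) * norm A * norm x"
proof -
  have "norm (A *v x) \<le> (\<Sum>i\<in>UNIV. \<bar>(A *v x)$i\<bar>)" by (rule norm_le_l1_cart)
  also have "\<dots> \<le> (\<Sum>i\<in>(UNIV::'n set). norm A * norm x)"
  proof (rule sum_mono)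
    fix i
    have "\<bar>(A *v x)$i\<bar> = \<bar>A$i \<bullet> x\<bar>" by (simp add: matrix_vector_mul_component)
    also have "\<dots> \<le> norm (A$i) * norm x" by (rule Cauchy_Schwarz_ineq2)
    also have "\<dots> \<le> norm A * norm x" by (simp add: mult_right_mono Finite_Cartesian_Product.norm_nth_le)
    finally show "\<bar>(A *v x)$i\<bar> \<le> norm A * norm x" .
  qed
  finally show ?thesis by simp
qed

lemma topspace_Gr: "topspace (Gr_topology k TYPE('n::finite)) = Gr k TYPE('n)"
  unfolding Gr_topology_def by (simp add: topspace_pullback_topology)

lemma in_closure_Gr:
  fixes V :: "(real^'n::finite) set"
  assumes "V \<in> Gr k TYPE('n)" "X \<subseteq> Gr k TYPE('n)" "\<And>e. e > 0 \<Longrightarrow> \<exists>W\<in>X. dist (proj_matrix W) (proj_matrix V) < e"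
  shows "V \<in> Gr_topology k TYPE('n) closure_of X"
  unfolding in_closure_of topspace_Gr
proof (intro conjI allI impI)
  show "V \<in> Gr k TYPE('n)" by fact
  fix T assume "V \<in> T \<and> openin (Gr_topology k TYPE('n)) T"
  then obtain U where U: "open U" "T = proj_matrix -` U \<inter> Gr k TYPE('n)" "V \<in> T"
    unfolding Gr_topology_def openin_pullback_topology by auto
  then have "proj_matrix V \<in> U" by auto
  then obtain e where e: "e > 0" "ball (proj_matrix V) e \<subseteq> U" using U(1) open_contains_ball by blast
  then obtain W where W: "W \<in> X" "dist (proj_matrix W) (proj_matrix V) < e" using assms(3) by blast
  show "\<exists>y. y \<in> X \<and> y \<in> T"
  proof (intro exI conjI)
    show "W \<in> X" by fact
    have "proj_matrix W \<in> ball (proj_matrix V) e" using W(2) by (simp add: dist_commute)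
    then have "proj_matrix W \<in> U" using e(2) by (rule subsetD[rotated])
    moreover have "W \<in> Gr k TYPE('n)" using W(1) assms(2) by (rule subsetD[rotated])
    ultimately show "W \<in> T" unfolding U(2) by simp
  qed
qed

lemma closure_Gr_D:
  fixes V :: "(real^'n::finite) set"
  assumes "V \<in> Gr_topology k TYPE('n) closure_of X" "e > 0"
  shows "V \<in> Gr k TYPE('n) \<and> (\<exists>W\<in>X. dist (proj_matrix W) (proj_matrix V) < e)"
proof -
  have V: "V \<in> Gr k TYPE('n)" using closure_of_subset_topspace[of "Gr_topology k TYPE('n)" X] assms(1) topspace_Gr
    by (metis subsetD)
  let ?T = "proj_matrix -` ball (proj_matrix V) e \<inter> Gr k TYPE('n)"
  have "openin (Gr_topology k TYPE('n)) ?T"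
    unfolding Gr_topology_def openin_pullback_topology by (intro exI[of _ "ball (proj_matrix V) e"]) simp
  moreover have "V \<in> ?T" using V assms(2) by simp
  ultimately obtain W where W: "W \<in> X" "W \<in> ?T" using assms(1) unfolding in_closure_of by meson
  then have "dist (proj_matrix W) (proj_matrix V) < e" by (simp add: dist_commute)
  then show ?thesis using V W(1) by blast
qed

lemma closure_sub_Pk:
  fixes S :: "(real^'n::finite) set"
  assumes "finite S" and V: "V \<in> Gr_topology k TYPE('n) closure_of (Pk_max (convex hull S) k)"
  shows "V \<in> Pk (convex hull S) k"
proof (rule ccontr)
  let ?Q = "convex hull S"
  let ?n = "real CARD('n)"
  assume nV: "V \<notin> Pk ?Q k"
  have VG: "V \<in> Gr k TYPE('n)" using closure_Gr_D[OF V, of 1] by simp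
  then have sV: "subspace V" by (simp add: Gr_def)
  have nm: "\<not> meets V ?Q" using nV VG by (simp add: Pk_def)
  obtain W0 where "W0 \<in> Pk_max ?Q k" using closure_Gr_D[OF V, of 1] by auto
  then have "meets W0 ?Q" by (simp add: Pk_max_def Pk_def)
  then have Qne: "?Q \<noteq> {}" by (auto simp: meets_def)
  have cQ: "compact ?Q" using assms(1) by (simp add: compact_convex_hull finite_imp_compact)
  define f where "f x = norm (x - proj_matrix V *v x)" for x
  have cf: "continuous_on ?Q f" unfolding f_def by (intro continuous_intros)
  obtain x0 where x0: "x0 \<in> ?Q" "\<And>y. y \<in> ?Q \<Longrightarrow> f x0 \<le> f y"
    using continuous_attains_inf[OF cQ Qne cf] by blast
  have "f x0 > 0"
  proof (rule ccontr)
    assume "\<not> f x0 > 0"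
    then have "x0 = orth_proj V x0" unfolding f_def pm_mult[OF sV] by simp
    then have "x0 \<in> V" using op_in[OF sV] by metis
    then show False using nm x0(1) by (auto simp: meets_def)
  qed
  obtain M where M: "M > 0" "\<And>x. x \<in> ?Q \<Longrightarrow> norm x \<le> M"
    using compact_imp_bounded[OF cQ] bounded_pos by blast
  define e where "e = f x0 / (2 * ?n * M)"
  have e: "e > 0" unfolding e_def using \<open>f x0 > 0\<close> M by simp
  obtain W where W: "W \<in> Pk_max ?Q k" "dist (proj_matrix W) (proj_matrix V) < e"
    using closure_Gr_D[OF V e] by blast
  have sW: "subspace W" using W(1) by (simp add: Pk_max_def Pk_def Gr_def)
  obtain x where x: "x \<in> ?Q" "x \<in> W" using W(1) by (auto simp: Pk_max_def Pk_def meets_def)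
  have "f x = norm ((proj_matrix W - proj_matrix V) *v x)"
    unfolding f_def using op_id[OF sW x(2)] pm_mult[OF sW, of x] by (simp add: matrix_vector_mult_diff_rdistrib)
  also have "\<dots> \<le> ?n * norm (proj_matrix W - proj_matrix V) * norm x" by (rule mat_mult_bound)
  also have "\<dots> \<le> ?n * e * M"
    using W(2) M(2)[OF x(1)] e by (intro mult_mono) (auto simp: dist_norm)
  also have "\<dots> = f x0 / 2" unfolding e_def using M by simp
  also have "\<dots> < f x0" using \<open>f x0 > 0\<close> by simp
  finally show False using x0(2)[OF x(1)] by simp
qed

lemma avoid_subspaces:
  fixes F :: "(real^'n::finite) set set"
  assumes "finite F" "\<forall>L\<in>F. subspace L \<and> dim L < CARD('n)" "\<eta> > 0"
  shows "\<exists>z. norm (z - b) < \<eta> \<and> (\<forall>L\<in>F. z \<notin> L)"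
proof -
  have "interior (\<Union>F) = {}"
    using assms(1,2)
  proof (induction F rule: finite_induct)
    case empty then show ?case by simp
  next
    case (insert L F)
    have "closed L" using insert.prems by (simp add: closed_subspace)
    have "interior (\<Union>F) = {}" using insert by simp
    have "interior (L \<union> \<Union>F) = interior L"
      by (rule interior_closed_Un_empty_interior[OF \<open>closed L\<close> \<open>interior (\<Union>F) = {}\<close>])
    also have "\<dots> = {}" using insert.prems by (intro empty_interior_lowdim) simp
    finally show ?case by simp
  qed
  moreover have "interior (ball b \<eta>) \<noteq> {}" using assms(3) by simp
  ultimately have "\<not> ball b \<eta> \<subseteq> \<Union>F" using interior_mono by blast
  then obtain z where "z \<in> ball b \<eta>" "z \<notin> \<Union>F" by blast
  then show ?thesis by (intro exI[of _ z]) (auto simp: dist_norm norm_minus_commute)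
qed

lemma dim_Un_le:
  fixes L X :: "(real^'n::finite) set"
  assumes "finite X"
  shows "dim (L \<union> X) \<le> dim L + card X"
proof -
  obtain BL where BL: "BL \<subseteq> L" "independent BL" "L \<subseteq> span BL" "card BL = dim L"
    using basis_exists by blast
  have fBL: "finite BL" using BL(2) by (rule finiteI_independent)
  have "L \<union> X \<subseteq> span (BL \<union> X)" using BL(3) span_mono[of BL "BL \<union> X"] span_superset[of "BL \<union> X"] by blast
  then have "dim (L \<union> X) \<le> card (BL \<union> X)" using fBL assms by (intro dim_le_card) auto
  also have "\<dots> \<le> card BL + card X" by (rule card_Un_le)
  finally show ?thesis using BL(4) by simp
qed

lemma extend_indep:
  fixes A B :: "(real^'n::finite) set" and F :: "(real^'n) set set"
  assumes "finite B" "finite F" "\<forall>L\<in>F. subspace L"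
    "\<forall>L\<in>F. dim L + card A + card B \<le> CARD('n)" "card A + card B \<le> CARD('n)"
    "independent A" "finite A" "\<forall>L\<in>F. span A \<inter> L \<subseteq> {0}" "\<eta> > 0"
  shows "\<exists>w. (\<forall>b\<in>B. norm (w b - b) < \<eta>) \<and> independent (A \<union> w ` B) \<and>
      card (A \<union> w ` B) = card A + card B \<and> (\<forall>L\<in>F. span (A \<union> w ` B) \<inter> L \<subseteq> {0})"
  using assms
proof (induction B rule: finite_induct)
  case empty
  then show ?case by auto
next
  case (insert b B)
  have "\<forall>L\<in>F. dim L + card A + card B \<le> CARD('n)" "card A + card B \<le> CARD('n)"
    using insert.prems(3,4) insert.hyps by auto
  then obtain w where w: "\<forall>b\<in>B. norm (w b - b) < \<eta>" "independent (A \<union> w ` B)"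
      "card (A \<union> w ` B) = card A + card B" "\<forall>L\<in>F. span (A \<union> w ` B) \<inter> L \<subseteq> {0}"
    using insert.IH insert.prems by blast
  define X where "X = A \<union> w ` B"
  have fX: "finite X" unfolding X_def using insert.hyps(1) insert.prems(6) by simp
  define F' where "F' = insert (span X) ((\<lambda>L. span (L \<union> X)) ` F)"
  have "finite F'" unfolding F'_def using insert.prems(1) by simp
  moreover have "\<forall>L\<in>F'. subspace L \<and> dim L < CARD('n)"
  proof
    fix L' assume "L' \<in> F'"
    then consider "L' = span X" | L where "L \<in> F" "L' = span (L \<union> X)" unfolding F'_def by blast
    then show "subspace L' \<and> dim L' < CARD('n)"
    proof cases
      case 1
      have "dim L' = card X" unfolding 1 dim_span using w(2) X_def dim_eq_card_independent by blast
      then show ?thesis using 1 w(3) insert.prems(4) insert.hyps unfolding X_def by simp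
    next
      case 2
      have "dim L' \<le> dim L + card X" unfolding 2 dim_span by (rule dim_Un_le[OF fX])
      then show ?thesis using 2 w(3) insert.prems(3) insert.hyps unfolding X_def by fastforce
    qed
  qed
  ultimately obtain z where z: "norm (z - b) < \<eta>" "\<forall>L\<in>F'. z \<notin> L"
    using avoid_subspaces insert.prems(8) by blast
  have zX: "z \<notin> span X" using z(2) unfolding F'_def by blast
  define w' where "w' = w(b := z)"
  have wB: "w' ` B = w ` B" unfolding w'_def using insert.hyps(2) by (auto intro!: image_cong)
  have "w' ` insert b B = insert z (w' ` B)" by (simp only: image_insert w'_def fun_upd_same)
  then have eq: "A \<union> w' ` insert b B = insert z X" unfolding X_def wB by simp
  have zX': "z \<notin> X" using zX span_superset by blast
  show ?case
  proof (intro exI[of _ w'] conjI)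
    show "\<forall>b'\<in>insert b B. norm (w' b' - b') < \<eta>"
    proof
      fix b' assume "b' \<in> insert b B"
      then show "norm (w' b' - b') < \<eta>"
        by (cases "b' = b") (use w(1) z(1) in \<open>simp_all add: w'_def\<close>)
    qed
    show "independent (A \<union> w' ` insert b B)" unfolding eq
      using independent_insertI[OF zX] w(2) unfolding X_def by blast
    have "card (insert z X) = card X + 1" using card_insert_disjoint[OF fX zX'] by simp
    then show "card (A \<union> w' ` insert b B) = card A + card (insert b B)" unfolding eq
      using w(3) insert.hyps unfolding X_def by simp
    show "\<forall>L\<in>F. span (A \<union> w' ` insert b B) \<inter> L \<subseteq> {0}"
    proof (intro ballI subsetI)
      fix L u assume L: "L \<in> F" and u: "u \<in> span (A \<union> w' ` insert b B) \<inter> L"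
      then obtain c where c: "u - c *\<^sub>R z \<in> span X" unfolding eq span_insert by blast
      have "c = 0"
      proof (rule ccontr)
        assume "c \<noteq> 0"
        have "u \<in> span (L \<union> X)" using u span_superset[of "L \<union> X"] by blast
        moreover have "u - c *\<^sub>R z \<in> span (L \<union> X)" using c span_mono[of X "L \<union> X"] by blast
        ultimately have "c *\<^sub>R z \<in> span (L \<union> X)"
          using span_diff[of u "L \<union> X" "u - c *\<^sub>R z"] by simp
        then have "z \<in> span (L \<union> X)" using \<open>c \<noteq> 0\<close> span_mul[of "c *\<^sub>R z" _ "inverse c"] by simp
        then show False using z(2) L unfolding F'_def by blast
      qed
      then have "u \<in> span X \<inter> L" using c u by simp
      then show "u \<in> {0}" using w(4) L X_def by blast
    qed
  qed
qed

lemma inner_orthonormal_sum: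
  fixes E :: "(real^'n::finite) set"
  assumes "finite E" "pairwise orthogonal E" "\<forall>e\<in>E. norm e = 1" "e' \<in> E"
  shows "(\<Sum>e\<in>E. c e *\<^sub>R e) \<bullet> e' = c e'"
proof -
  have "(\<Sum>e\<in>E. c e *\<^sub>R e) \<bullet> e' = (\<Sum>e\<in>E. c e * (e \<bullet> e'))"
    by (simp add: inner_sum_left)
  also have "\<dots> = (\<Sum>e\<in>E. if e = e' then c e' else 0)"
  proof (rule sum.cong)
    fix e assume "e \<in> E"
    show "c e * (e \<bullet> e') = (if e = e' then c e' else 0)"
    proof (cases "e = e'")
      case True
      then have "e \<bullet> e' = 1" using assms(3,4) by (simp add: norm_eq_1)
      then show ?thesis using True by simp
    next
      case False
      then have "e \<bullet> e' = 0" using assms(2,4) \<open>e \<in> E\<close> by (auto simp: pairwise_def orthogonal_def)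
      then show ?thesis using False by simp
    qed
  qed simp
  also have "\<dots> = c e'" using assms(1,4) by simp
  finally show ?thesis .
qed

lemma orthonormal_expand:
  fixes E :: "(real^'n::finite) set"
  assumes "finite E" "pairwise orthogonal E" "\<forall>e\<in>E. norm e = 1" "v \<in> span E"
  shows "v = (\<Sum>e\<in>E. (v \<bullet> e) *\<^sub>R e)"
proof -
  define r where "r = v - (\<Sum>e\<in>E. (v \<bullet> e) *\<^sub>R e)"
  have rs: "r \<in> span E" unfolding r_def
    by (intro span_diff assms(4) span_sum span_mul span_base)
  have "orthogonal r y" if "y \<in> E" for y
  proof -
    have "r \<bullet> y = v \<bullet> y - (\<Sum>e\<in>E. (v \<bullet> e) *\<^sub>R e) \<bullet> y" unfolding r_def by (simp add: inner_diff_left)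
    also have "\<dots> = 0" using inner_orthonormal_sum[OF assms(1-3) that, of "\<lambda>e. v \<bullet> e"] by simp
    finally show ?thesis by (simp add: orthogonal_def)
  qed
  then have "orthogonal r r" using orthogonal_to_span[OF rs] by blast
  then have "r = 0" by (simp add: orthogonal_def)
  then show ?thesis unfolding r_def by simp
qed

lemma span_image_repr:
  fixes E :: "'a set" and f :: "'a \<Rightarrow> real^'n::finite"
  assumes "finite E" "y \<in> span (f ` E)"
  shows "\<exists>c. y = (\<Sum>e\<in>E. c e *\<^sub>R f e)"
  using assms(2)
proof (induction rule: span_induct_alt)
  case base
  show ?case by (intro exI[of _ "\<lambda>_. 0"]) simp
next
  case (step k x y)
  then obtain c where c: "y = (\<Sum>e\<in>E. c e *\<^sub>R f e)" by blast
  obtain e0 where e0: "e0 \<in> E" "x = f e0" using step.hyps(1) by blast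
  define c' where "c' e = c e + (if e = e0 then k else 0)" for e
  have "(\<Sum>e\<in>E. c' e *\<^sub>R f e) = (\<Sum>e\<in>E. c e *\<^sub>R f e) + (\<Sum>e\<in>E. (if e = e0 then k else 0) *\<^sub>R f e)"
    unfolding c'_def by (simp add: scaleR_add_left sum.distrib)
  also have "(\<Sum>e\<in>E. (if e = e0 then k else 0) *\<^sub>R f e) = (\<Sum>e\<in>E. if e = e0 then k *\<^sub>R f e else 0)"
    by (rule sum.cong) auto
  also have "\<dots> = k *\<^sub>R f e0" using assms(1) e0(1) by simp
  finally show ?case using c e0 by (intro exI[of _ c']) (simp add: add.commute)
qed

lemma approx_subspaces:
  fixes E :: "(real^'n::finite) set" and f :: "real^'n \<Rightarrow> real^'n"
  assumes fin: "finite E" and orth: "pairwise orthogonal E" and unit: "\<forall>e\<in>E. norm e = 1"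
    and close: "\<forall>e\<in>E. norm (f e - e) \<le> \<eta>" and eta: "\<eta> \<ge> 0" and small: "real (card E) * \<eta> \<le> 1/2"
  shows "\<forall>v\<in>span E. norm (v - orth_proj (span (f ` E)) v) \<le> (real (card E) * \<eta>) * norm v"
    and "\<forall>w\<in>span (f ` E). norm (w - orth_proj (span E) w) \<le> (2 * real (card E) * \<eta>) * norm w"
proof -
  have ce: "\<bar>(\<Sum>e\<in>E. c e *\<^sub>R e) \<bullet> e'\<bar> \<le> norm (\<Sum>e\<in>E. c e *\<^sub>R e)" if "e' \<in> E" for c e'
    using Cauchy_Schwarz_ineq2[of "\<Sum>e\<in>E. c e *\<^sub>R e" e'] unit that by simp
  have diffb: "norm (\<Sum>e\<in>E. c e *\<^sub>R (e - f e)) \<le> real (card E) * \<eta> * M"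
    if "\<And>e. e \<in> E \<Longrightarrow> \<bar>c e\<bar> \<le> M" for c M
  proof -
    have "norm (\<Sum>e\<in>E. c e *\<^sub>R (e - f e)) \<le> (\<Sum>e\<in>E. norm (c e *\<^sub>R (e - f e)))" by (rule norm_sum)
    also have "\<dots> \<le> (\<Sum>e\<in>E. M * \<eta>)"
    proof (rule sum_mono)
      fix e assume "e \<in> E"
      have "norm (e - f e) \<le> \<eta>" using close \<open>e \<in> E\<close> by (simp add: norm_minus_commute)
      then show "norm (c e *\<^sub>R (e - f e)) \<le> M * \<eta>"
        using that[OF \<open>e \<in> E\<close>] by (simp add: mult_mono')
    qed
    finally show ?thesis by (simp add: mult.commute mult.left_commute)
  qed
  show "\<forall>v\<in>span E. norm (v - orth_proj (span (f ` E)) v) \<le> (real (card E) * \<eta>) * norm v"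
  proof
    fix v assume v: "v \<in> span E"
    have ve: "v = (\<Sum>e\<in>E. (v \<bullet> e) *\<^sub>R e)" by (rule orthonormal_expand[OF fin orth unit v])
    define y where "y = (\<Sum>e\<in>E. (v \<bullet> e) *\<^sub>R f e)"
    have ys: "y \<in> span (f ` E)" unfolding y_def by (intro span_sum span_mul span_base) auto
    have "v - y = (\<Sum>e\<in>E. (v \<bullet> e) *\<^sub>R (e - f e))"
      unfolding y_def by (subst ve) (simp add: scaleR_diff_right sum_subtractf)
    moreover have "\<bar>v \<bullet> e\<bar> \<le> norm v" if "e \<in> E" for e
      using Cauchy_Schwarz_ineq2[of v e] unit that by simp
    ultimately have "norm (v - y) \<le> real (card E) * \<eta> * norm v" using diffb by metis
    moreover have "norm (v - orth_proj (span (f ` E)) v) \<le> norm (v - y)"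
      by (rule op_min[OF subspace_span ys])
    ultimately show "norm (v - orth_proj (span (f ` E)) v) \<le> (real (card E) * \<eta>) * norm v" by simp
  qed
  show "\<forall>w\<in>span (f ` E). norm (w - orth_proj (span E) w) \<le> (2 * real (card E) * \<eta>) * norm w"
  proof
    fix w assume w: "w \<in> span (f ` E)"
    obtain c where c: "w = (\<Sum>e\<in>E. c e *\<^sub>R f e)" using span_image_repr[OF fin w] by blast
    define u where "u = (\<Sum>e\<in>E. c e *\<^sub>R e)"
    have us: "u \<in> span E" unfolding u_def by (intro span_sum span_mul span_base)
    have cb: "\<bar>c e\<bar> \<le> norm u" if "e \<in> E" for e
      using ce[OF that, of c] inner_orthonormal_sum[OF fin orth unit that, of c] unfolding u_def by simp
    have "u - w = (\<Sum>e\<in>E. c e *\<^sub>R (e - f e))"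
      unfolding u_def c by (simp add: scaleR_diff_right sum_subtractf)
    then have uw: "norm (u - w) \<le> real (card E) * \<eta> * norm u" using diffb cb by metis
    also have "\<dots> \<le> 1/2 * norm u" using mult_right_mono[OF small, of "norm u"] by simp
    finally have "norm (u - w) \<le> 1/2 * norm u" .
    moreover have "norm u \<le> norm w + norm (u - w)" by (metis norm_triangle_sub add.commute)
    ultimately have nu: "norm u \<le> 2 * norm w" by simp
    have "norm (w - orth_proj (span E) w) \<le> norm (w - u)" by (rule op_min[OF subspace_span us])
    also have "\<dots> \<le> real (card E) * \<eta> * norm u" using uw by (simp add: norm_minus_commute)
    also have "\<dots> \<le> real (card E) * \<eta> * (2 * norm w)"
      using nu eta by (intro mult_left_mono) auto
    finally show "norm (w - orth_proj (span E) w) \<le> (2 * real (card E) * \<eta>) * norm w" by simp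
  qed
qed

lemma hull_hyper:
  fixes S :: "(real^'n::finite) set"
  assumes "\<forall>v\<in>S. a \<bullet> v = b" "x \<in> convex hull S"
  shows "a \<bullet> x = b"
proof -
  have "convex hull S \<subseteq> {x. a \<bullet> x = b}"
    using assms(1) by (intro hull_minimal) (auto simp: convex_hyperplane)
  then show ?thesis using assms(2) by blast
qed

lemma span_hyper_affine:
  fixes G :: "(real^'n::finite) set"
  assumes "\<forall>g\<in>G. a \<bullet> g = b" "b \<noteq> 0" "x \<in> span G" "a \<bullet> x = b"
  shows "x \<in> affine hull G"
proof -
  obtain T u where T: "finite T" "T \<subseteq> G" "(\<Sum>v\<in>T. u v *\<^sub>R v) = x"
    using assms(3) unfolding span_explicit by blast
  have "a \<bullet> x = (\<Sum>v\<in>T. u v * (a \<bullet> v))" unfolding T(3)[symmetric] by (simp add: inner_sum_right)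
  also have "\<dots> = (\<Sum>v\<in>T. u v * b)" using T(2) assms(1) by (intro sum.cong) auto
  also have "\<dots> = b * sum u T" by (simp add: sum_distrib_left mult.commute)
  finally have "sum u T = 1" using assms(2,4) by simp
  then have "T \<noteq> {}" by auto
  then show ?thesis unfolding affine_hull_explicit using T \<open>sum u T = 1\<close> by blast
qed

lemma dim_le_aff_dim:
  fixes G :: "(real^'n::finite) set"
  shows "int (dim G) \<le> aff_dim G + 1"
proof -
  have "aff_dim (insert 0 G) = int (dim (insert 0 G))" by (rule aff_dim_zero) (simp add: hull_inc)
  also have "dim (insert 0 G) = dim G" by (simp add: dim_insert span_zero)
  finally have "aff_dim (insert 0 G) = int (dim G)" .
  moreover have "aff_dim (insert 0 G) \<le> aff_dim G + 1" by (simp add: aff_dim_insert)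
  ultimately show ?thesis by simp
qed

lemma approx_max:
  fixes S :: "(real^'n::finite) set"
  assumes fin: "finite S" and b0: "b \<noteq> 0" and hyp: "\<forall>v\<in>S. a \<bullet> v = b"
    and aff: "aff_dim (convex hull S) = int CARD('n) - 1"
    and k1: "1 \<le> k" and kn: "k \<le> CARD('n)"
    and V: "V \<in> Pk (convex hull S) k" and e: "e > 0"
  shows "\<exists>W\<in>Pk_max (convex hull S) k. dist (proj_matrix W) (proj_matrix V) < e"
proof -
  define Q where "Q = convex hull S"
  define n where "n = CARD('n)"
  have hQ: "a \<bullet> x = b" if "x \<in> Q" for x using hull_hyper[OF hyp] that unfolding Q_def by blast
  have sV: "subspace V" and dV: "dim V = k" using V by (auto simp: Pk_def Gr_def)
  obtain x0 where x0: "x0 \<in> V" "x0 \<in> Q" using V by (auto simp: Pk_def meets_def Q_def)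
  have x00: "x0 \<noteq> 0" using hQ[OF x0(2)] b0 by auto
  define v1 where "v1 = x0 /\<^sub>R norm x0"
  have v1V: "v1 \<in> V" unfolding v1_def using sV x0(1) by (simp add: subspace_scale)
  have nv1: "norm v1 = 1" unfolding v1_def using x00 by simp
  have v1v1: "v1 \<bullet> v1 = 1" using nv1 by (simp add: norm_eq_1)
  define V' where "V' = V \<inter> {y. v1 \<bullet> y = 0}"
  have sV': "subspace V'" unfolding V'_def using sV subspace_hyperplane[of v1] by (rule subspace_inter)
  obtain B' where B': "B' \<subseteq> V'" "pairwise orthogonal B'" "\<And>x. x \<in> B' \<Longrightarrow> norm x = 1"
    "independent B'" "card B' = dim V'" "span B' = V'"
    using orthonormal_basis_subspace[OF sV'] by blast
  have fB': "finite B'" using B'(4) by (rule finiteI_independent)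
  have v1B': "v1 \<notin> B'" using B'(1) v1v1 unfolding V'_def by auto
  define E where "E = insert v1 B'"
  have fE: "finite E" unfolding E_def using fB' by simp
  have oE: "pairwise orthogonal E" unfolding E_def pairwise_insert
    using B'(1,2) unfolding V'_def by (auto simp: orthogonal_def inner_commute)
  have uE: "\<forall>e\<in>E. norm e = 1" unfolding E_def using nv1 B'(3) by auto
  have spanE: "span E = V"
  proof
    show "span E \<subseteq> V" unfolding E_def using v1V B'(1) sV unfolding V'_def
      by (intro span_minimal) auto
    show "V \<subseteq> span E"
    proof
      fix v assume "v \<in> V"
      have "v - (v1 \<bullet> v) *\<^sub>R v1 \<in> V" using \<open>v \<in> V\<close> v1V sV by (simp add: subspace_diff subspace_scale)
      moreover have "v1 \<bullet> (v - (v1 \<bullet> v) *\<^sub>R v1) = 0" using v1v1 by (simp add: inner_diff_right)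
      ultimately have "v - (v1 \<bullet> v) *\<^sub>R v1 \<in> span B'" unfolding B'(6) V'_def by simp
      then show "v \<in> span E" unfolding E_def span_insert by blast
    qed
  qed
  have "0 \<notin> E" using uE by force
  then have iE: "independent E" using oE pairwise_orthogonal_independent by blast
  have cE: "card E = k" using dV spanE dim_span dim_eq_card_independent[OF iE] by metis
  have cB': "card B' = k - 1" using cE fB' v1B' unfolding E_def by simp
  define \<eta> where "\<eta> = min (1 / (2 * real k)) (e / (6 * real k * real n * real n))"
  have n1: "n \<ge> 1" using k1 kn n_def by simp
  have eta0: "\<eta> > 0" unfolding \<eta>_def using k1 n1 e by simp
  have eta1: "real k * \<eta> \<le> 1/2"
  proof -
    have "\<eta> \<le> 1 / (2 * real k)" unfolding \<eta>_def by simp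
    then have "real k * \<eta> \<le> real k * (1 / (2 * real k))" by (rule mult_left_mono) simp
    also have "\<dots> = 1/2" using k1 by simp
    finally show ?thesis .
  qed
  have eta2: "real n * real n * (3 * real k * \<eta>) < e"
  proof -
    have "\<eta> \<le> e / (6 * real k * real n * real n)" unfolding \<eta>_def by simp
    then have "real n * real n * (3 * real k * \<eta>) \<le> real n * real n * (3 * real k * (e / (6 * real k * real n * real n)))"
      by (intro mult_left_mono) auto
    also have "\<dots> = e / 2" using k1 n1 by (simp add: field_simps)
    finally show ?thesis using e by simp
  qed
  have cQ: "convex Q" unfolding Q_def by simp
  have "Q \<noteq> {}" using x0 by auto
  then obtain y where y: "y \<in> rel_interior Q" using rel_interior_eq_empty[OF cQ] by blast
  define t where "t = min 1 (\<eta> * norm x0 / (2 * (norm (x0 - y) + 1)))"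
  have "0 < \<eta> * norm x0 / (2 * (norm (x0 - y) + 1))" using eta0 x00
    by (intro divide_pos_pos mult_pos_pos) (auto intro: add_nonneg_pos)
  then have t0: "t > 0" unfolding t_def by simp
  have t1: "t \<le> 1" unfolding t_def by simp
  define x1 where "x1 = x0 - t *\<^sub>R (x0 - y)"
  have x1r: "x1 \<in> rel_interior Q" unfolding x1_def
    using rel_interior_closure_convex_shrink[OF cQ y _ t0 t1] closure_subset x0(2) by blast
  have x1Q: "x1 \<in> Q" using x1r rel_interior_subset by blast
  have x10: "x1 \<noteq> 0" using hQ[OF x1Q] b0 by auto
  have dx1: "norm (x1 - x0) < \<eta> * norm x0"
  proof -
    have "norm (x1 - x0) = t * norm (x0 - y)" unfolding x1_def using t0 by simp
    also have "\<dots> \<le> (\<eta> * norm x0 / (2 * (norm (x0 - y) + 1))) * norm (x0 - y)"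
      unfolding t_def by (intro mult_right_mono) auto
    also have "\<dots> \<le> (\<eta> * norm x0 / (2 * (norm (x0 - y) + 1))) * (norm (x0 - y) + 1)"
      using eta0 by (intro mult_left_mono) auto
    also have "\<dots> = \<eta> * norm x0 / 2"
    proof -
      have "norm (x0 - y) + 1 \<noteq> 0" by (metis add_nonneg_pos norm_ge_zero zero_less_one less_irrefl)
      then show ?thesis by (simp add: field_simps)
    qed
    also have "\<dots> < \<eta> * norm x0" using eta0 x00 by simp
    finally show ?thesis .
  qed
  define u1 where "u1 = x1 /\<^sub>R norm x0"
  have du1: "norm (u1 - v1) < \<eta>"
  proof -
    have "u1 - v1 = (x1 - x0) /\<^sub>R norm x0" unfolding u1_def v1_def by (simp add: scaleR_diff_right)
    then have "norm (u1 - v1) = norm (x1 - x0) / norm x0" by (simp add: divide_inverse mult.commute)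
    also have "\<dots> < \<eta>" using dx1 x00 by (simp add: divide_less_eq mult.commute)
    finally show ?thesis .
  qed
  have u10: "u1 \<noteq> 0" unfolding u1_def using x10 x00 by simp
  have x1u1: "x1 = norm x0 *\<^sub>R u1" unfolding u1_def using x00 by simp
  define Fam where "Fam = {G. G face_of Q \<and> aff_dim G < int n - int k}"
  define F where "F = span ` Fam"
  have "polytope Q" unfolding Q_def polytope_def using fin by blast
  then have "finite {G. G face_of Q}" by (rule finite_polytope_faces)
  then have "finite Fam" unfolding Fam_def by (rule finite_subset[rotated]) auto
  then have fF: "finite F" unfolding F_def by simp
  have sF: "\<forall>L\<in>F. subspace L" unfolding F_def by auto
  have dF: "\<forall>L\<in>F. dim L + card {u1} + card B' \<le> CARD('n)"
  proof
    fix L assume "L \<in> F"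
    then obtain G where G: "G \<in> Fam" "L = span G" unfolding F_def by blast
    have "int (dim G) \<le> aff_dim G + 1" by (rule dim_le_aff_dim)
    then have "dim G \<le> n - k" using G(1) kn unfolding Fam_def n_def by auto
    then show "dim L + card {u1} + card B' \<le> CARD('n)" using G(2) cB' k1 kn unfolding n_def by simp
  qed
  have x1nG: "x1 \<notin> span G" if "G \<in> Fam" for G
  proof
    assume x1G: "x1 \<in> span G"
    have Gf: "G face_of Q" and Ga: "aff_dim G < int n - int k" using that unfolding Fam_def by auto
    have "G \<noteq> Q" using Ga aff k1 unfolding Q_def n_def by auto
    have "\<forall>g\<in>G. a \<bullet> g = b" using face_of_imp_subset[OF Gf] hQ by blast
    then have "x1 \<in> affine hull G" using span_hyper_affine b0 x1G hQ[OF x1Q] by blast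
    then show False using affine_hull_face_of_disjoint_rel_interior[OF cQ Gf \<open>G \<noteq> Q\<close>] x1r by blast
  qed
  have aF: "\<forall>L\<in>F. span {u1} \<inter> L \<subseteq> {0}"
  proof (intro ballI subsetI)
    fix L z assume L: "L \<in> F" and z: "z \<in> span {u1} \<inter> L"
    obtain G where G: "G \<in> Fam" "L = span G" using L unfolding F_def by blast
    obtain c where c: "z = c *\<^sub>R u1" using z span_singleton by auto
    show "z \<in> {0}"
    proof (cases "c = 0")
      case True then show ?thesis using c by simp
    next
      case False
      have "x1 = (norm x0 / c) *\<^sub>R z" using c False x1u1 by simp
      then have "x1 \<in> span G" using z G(2) by (simp add: span_mul)
      then show ?thesis using x1nG[OF G(1)] by blast
    qed
  qed
  have iA: "independent {u1}" using u10 by (intro independent_insertI independent_empty) auto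
  have "card {u1} + card B' \<le> CARD('n)" using cB' k1 kn by simp
  then obtain w where w: "\<forall>b\<in>B'. norm (w b - b) < \<eta>" "independent ({u1} \<union> w ` B')"
      "card ({u1} \<union> w ` B') = card {u1} + card B'" "\<forall>L\<in>F. span ({u1} \<union> w ` B') \<inter> L \<subseteq> {0}"
    using extend_indep[OF fB' fF sF dF _ iA _ aF eta0] by auto
  define W where "W = span ({u1} \<union> w ` B')"
  have sW: "subspace W" unfolding W_def by simp
  have dW: "dim W = k" unfolding W_def dim_span using dim_eq_card_independent[OF w(2)] w(3) cB' k1 by simp
  have x1W: "x1 \<in> W" unfolding W_def x1u1 by (intro span_mul span_base) simp
  have WPk: "W \<in> Pk Q k" unfolding Pk_def Gr_def meets_def using sW dW x1W x1Q by auto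
  have WPm: "W \<in> Pk_max Q k" unfolding Pk_max_def
  proof (intro CollectI conjI allI impI WPk)
    fix G assume G: "G face_of Q \<and> aff_dim G < int CARD('n) - int k"
    show "\<not> meets W G"
    proof
      assume "meets W G"
      then obtain g where g: "g \<in> G" "g \<in> W" unfolding meets_def by blast
      have "G \<in> Fam" using G unfolding Fam_def n_def by simp
      then have "span G \<in> F" unfolding F_def by simp
      then have "g \<in> {0}" using w(4) g span_base[OF g(1)] unfolding W_def by blast
      moreover have "g \<in> Q" using face_of_imp_subset G g by blast
      ultimately show False using hQ b0 by fastforce
    qed
  qed
  define f where "f = w(v1 := u1)"
  have fE_eq: "f ` E = {u1} \<union> w ` B'"
  proof -
    have "f ` B' = w ` B'" unfolding f_def using v1B' by (auto intro!: image_cong)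
    then show ?thesis unfolding E_def by (simp only: image_insert f_def fun_upd_same) simp
  qed
  have cl: "\<forall>e\<in>E. norm (f e - e) \<le> \<eta>"
  proof
    fix e' assume "e' \<in> E"
    then show "norm (f e' - e') \<le> \<eta>"
      unfolding E_def using w(1) du1 v1B' by (cases "e' = v1") (auto simp: f_def less_imp_le)
  qed
  have ap: "\<forall>v\<in>span E. norm (v - orth_proj (span (f ` E)) v) \<le> (real (card E) * \<eta>) * norm v"
     "\<forall>w\<in>span (f ` E). norm (w - orth_proj (span E) w) \<le> (2 * real (card E) * \<eta>) * norm w"
    using approx_subspaces[OF fE oE uE cl _ ] eta0 eta1 cE by auto
  have WfE: "span (f ` E) = W" unfolding W_def fE_eq ..
  have pd: "norm (orth_proj V x - orth_proj W x) \<le> (real k * \<eta> + 2 * real k * \<eta>) * norm x" for x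
    using proj_diff[OF sV sW, of "real k * \<eta>" "2 * real k * \<eta>" x] ap eta0 unfolding spanE WfE cE
    by simp
  have "norm ((proj_matrix V - proj_matrix W) *v x) \<le> (3 * real k * \<eta>) * norm x" for x
    using pd[of x] by (simp add: matrix_vector_mult_diff_rdistrib pm_mult[OF sV] pm_mult[OF sW] algebra_simps)
  then have "norm (proj_matrix V - proj_matrix W) \<le> real CARD('n) * real CARD('n) * (3 * real k * \<eta>)"
    by (rule mat_norm_bound)
  then have "dist (proj_matrix W) (proj_matrix V) < e" using eta2 unfolding n_def
    by (simp add: dist_norm norm_minus_commute)
  then show ?thesis using WPm unfolding Q_def by blast
qed

theorem proposition3p6:
  fixes S :: "(real^'n::finite) set" and a :: "real^'n" and b :: real and k :: nat
  assumes "finite S" and "b \<noteq> 0" and "\<forall>v\<in>S. a \<bullet> v = b"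
    and "aff_dim (convex hull S) = int CARD('n) - 1"
    and "1 \<le> k" and "k \<le> CARD('n)"
  shows "Pk (convex hull S) k = (Gr_topology k TYPE('n)) closure_of (Pk_max (convex hull S) k)"
proof
  show "Pk (convex hull S) k \<subseteq> Gr_topology k TYPE('n) closure_of Pk_max (convex hull S) k"
  proof
    fix V assume V: "V \<in> Pk (convex hull S) k"
    then have VG: "V \<in> Gr k TYPE('n)" by (simp add: Pk_def)
    have sub: "Pk_max (convex hull S) k \<subseteq> Gr k TYPE('n)" by (auto simp: Pk_max_def Pk_def)
    show "V \<in> Gr_topology k TYPE('n) closure_of Pk_max (convex hull S) k"
      by (rule in_closure_Gr[OF VG sub]) (rule approx_max[OF assms V])
  qed
  show "Gr_topology k TYPE('n) closure_of Pk_max (convex hull S) k \<subseteq> Pk (convex hull S) k"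
    using closure_sub_Pk[OF assms(1)] by blast
qed

end
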